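(* Let $A=[a_{ij}]\in\mathcal{M}_3(\mathbb{H})$ be a strictly upper triangular (hence nilpotent) matrix. Then $W(A)$ is a closed disk centered at the origin if and only if $A$ is cycle-free, i.e. if and only if $a_{12}a_{13}a_{23}=0$ (at least one of $a_{12},a_{13},a_{23}$ vanishes).
   Context: $\mathbb{H}$ denotes the real quaternions. The numerical range of $A\in\mathcal{M}_n(\mathbb{H})$ is $W(A)=\{\mathbf{x}^*A\mathbf{x}:\mathbf{x}\in\mathbb{H}^n,\ \mathbf{x}^*\mathbf{x}=1\}$; a closed disk centered at the origin is $\{q\in\mathbb{H}:|q|\le r\}$ for some $r\ge0$. The graph $\mathcal{G}_A$ of $A=[a_{ij}]$ is the undirected graph on $\{1,\dots,n\}$ with an edge between $i$ and $j$ (a loop if $i=j$) whenever $a_{ij}\ne0$ or $a_{ji}\ne0$; $A$ is cycle-free if $\mathcal{G}_A$ contains no cycle. *)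

theory Defs
  imports Complex_Main
begin

datatype quat = Quat (qRe: real) (qI: real) (qJ: real) (qK: real)

instantiation quat :: "{zero, plus, times}"
begin
definition zero_quat_def: "0 = Quat 0 0 0 0"
definition plus_quat_def:
  "p + q = Quat (qRe p + qRe q) (qI p + qI q) (qJ p + qJ q) (qK p + qK q)"
text \<open>Hamilton product, with i^2 = j^2 = k^2 = ijk = -1.\<close>
definition times_quat_def:
  "p * q = Quat
     (qRe p * qRe q - qI p * qI q - qJ p * qJ q - qK p * qK q)
     (qRe p * qI q + qI p * qRe q + qJ p * qK q - qK p * qJ q)
     (qRe p * qJ q - qI p * qK q + qJ p * qRe q + qK p * qI q)
     (qRe p * qK q + qI p * qJ q - qJ p * qI q + qK p * qRe q)"
instance ..
end

instance quat :: comm_monoid_add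
  by standard (simp_all add: plus_quat_def zero_quat_def algebra_simps)


definition qcnj :: "quat \<Rightarrow> quat" where
  "qcnj q = Quat (qRe q) (- qI q) (- qJ q) (- qK q)"

definition qabs :: "quat \<Rightarrow> real" where
  "qabs q = sqrt ((qRe q)\<^sup>2 + (qI q)\<^sup>2 + (qJ q)\<^sup>2 + (qK q)\<^sup>2)"

text \<open>A matrix A in M_n(H) is a function nat => nat => quat, only entries
  with indices in {1..n} are relevant; a vector x in H^n is nat => quat,
  only components with indices in {1..n} are relevant.\<close>

definition numerical_range :: "nat \<Rightarrow> (nat \<Rightarrow> nat \<Rightarrow> quat) \<Rightarrow> quat set" where
  "numerical_range n A =
     {(\<Sum>i\<in>{1..n}. \<Sum>j\<in>{1..n}. qcnj (x i) * A i j * x j) | x.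
        (\<Sum>i\<in>{1..n}. qcnj (x i) * x i) = (Quat 1 0 0 0)}"

definition closed_disk_origin :: "quat set \<Rightarrow> bool" where
  "closed_disk_origin S \<longleftrightarrow> (\<exists>r::real. r \<ge> 0 \<and> S = {q. qabs q \<le> r})"

definition strictly_upper_triangular :: "nat \<Rightarrow> (nat \<Rightarrow> nat \<Rightarrow> quat) \<Rightarrow> bool" where
  "strictly_upper_triangular n A \<longleftrightarrow>
     (\<forall>i\<in>{1..n}. \<forall>j\<in>{1..n}. j \<le> i \<longrightarrow> A i j = 0)"

definition graph_adj :: "(nat \<Rightarrow> nat \<Rightarrow> quat) \<Rightarrow> nat \<Rightarrow> nat \<Rightarrow> bool" where
  "graph_adj A i j \<longleftrightarrow> A i j \<noteq> 0 \<or> A j i \<noteq> 0"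

text \<open>A cycle in G_A: either a loop at a vertex, or a closed walk
  v_1, ..., v_k, v_1 through k \<ge> 3 distinct vertices of {1..n}
  (a simple graph has no 2-cycles).\<close>
definition has_cycle :: "nat \<Rightarrow> (nat \<Rightarrow> nat \<Rightarrow> quat) \<Rightarrow> bool" where
  "has_cycle n A \<longleftrightarrow>
     (\<exists>i\<in>{1..n}. graph_adj A i i) \<or>
     (\<exists>vs. length vs \<ge> 3 \<and> distinct vs \<and> set vs \<subseteq> {1..n} \<and>
        (\<forall>k < length vs - 1. graph_adj A (vs ! k) (vs ! Suc k)) \<and>
        graph_adj A (last vs) (hd vs))"

definition cycle_free :: "nat \<Rightarrow> (nat \<Rightarrow> nat \<Rightarrow> quat) \<Rightarrow> bool" where
  "cycle_free n A \<longleftrightarrow> \<not> has_cycle n A"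

end

theory Submission
  imports Defs
begin

lemma quat_eqI: "qRe p = qRe q \<Longrightarrow> qI p = qI q \<Longrightarrow> qJ p = qJ q \<Longrightarrow> qK p = qK q \<Longrightarrow> p = q"
  by (cases p; cases q) simp

instantiation quat :: "{uminus, minus, one, scaleR}"
begin
definition uminus_quat_def: "- p = Quat (- qRe p) (- qI p) (- qJ p) (- qK p)"
definition minus_quat_def: "p - q = Quat (qRe p - qRe q) (qI p - qI q) (qJ p - qJ q) (qK p - qK q)"
definition one_quat_def: "1 = Quat 1 0 0 0"
definition scaleR_quat_def: "scaleR r p = Quat (r * qRe p) (r * qI p) (r * qJ p) (r * qK p)"
instance ..
end

lemma quat_comps0[simp]:
  "qRe 0 = 0" "qI 0 = 0" "qJ 0 = 0" "qK 0 = 0"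
  by (simp_all add: zero_quat_def)
lemma quat_comps1[simp]:
  "qRe 1 = 1" "qI 1 = 0" "qJ 1 = 0" "qK 1 = 0"
  by (simp_all add: one_quat_def)
lemma quat_comps2[simp]:
  "qRe (p + q) = qRe p + qRe q" "qI (p + q) = qI p + qI q" "qJ (p + q) = qJ p + qJ q" "qK (p + q) = qK p + qK q"
  by (simp_all add: plus_quat_def)
lemma quat_comps3[simp]:
  "qRe (p - q) = qRe p - qRe q" "qI (p - q) = qI p - qI q" "qJ (p - q) = qJ p - qJ q" "qK (p - q) = qK p - qK q"
  by (simp_all add: minus_quat_def)
lemma quat_comps4[simp]:
  "qRe (- p) = - qRe p" "qI (- p) = - qI p" "qJ (- p) = - qJ p" "qK (- p) = - qK p"
  by (simp_all add: uminus_quat_def)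
lemma quat_comps5[simp]:
  "qRe (r *\<^sub>R p) = r * qRe p" "qI (r *\<^sub>R p) = r * qI p" "qJ (r *\<^sub>R p) = r * qJ p" "qK (r *\<^sub>R p) = r * qK p"
  by (simp_all add: scaleR_quat_def)
lemma quat_comps6[simp]:
  "qRe (p * q) = qRe p * qRe q - qI p * qI q - qJ p * qJ q - qK p * qK q"
  "qI (p * q) = qRe p * qI q + qI p * qRe q + qJ p * qK q - qK p * qJ q"
  "qJ (p * q) = qRe p * qJ q - qI p * qK q + qJ p * qRe q + qK p * qI q"
  "qK (p * q) = qRe p * qK q + qI p * qJ q - qJ p * qI q + qK p * qRe q"
  by (simp_all add: times_quat_def)
lemma quat_comps7[simp]:
  "qRe (qcnj p) = qRe p" "qI (qcnj p) = - qI p" "qJ (qcnj p) = - qJ p" "qK (qcnj p) = - qK p"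
  by (simp_all add: qcnj_def)

lemma quat_mult_assoc: "(a * b) * c = a * (b * (c::quat))"
  by (rule quat_eqI; simp; algebra)

instance quat :: ring_1
proof
  fix a b c :: quat
  show "a * b * c = a * (b * c)" by (rule quat_mult_assoc)
  show "(a + b) * c = a * c + b * c" by (rule quat_eqI; simp; algebra)
  show "a * (b + c) = a * b + a * c" by (rule quat_eqI; simp; algebra)
  show "1 * a = a" by (rule quat_eqI; simp)
  show "a * 1 = a" by (rule quat_eqI; simp)
  show "- a + a = 0" by (rule quat_eqI; simp)
  show "a - b = a + (- b)" by (rule quat_eqI; simp)
  show "(0::quat) \<noteq> 1" by (metis quat_comps0(1) quat_comps1(1) zero_neq_one)
qed

instance quat :: real_algebra_1
  by standard (rule quat_eqI; simp; algebra)+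

definition nrm :: "quat \<Rightarrow> real" where
  "nrm q = (qRe q)\<^sup>2 + (qI q)\<^sup>2 + (qJ q)\<^sup>2 + (qK q)\<^sup>2"

lemma nrm_mult: "nrm (p * q) = nrm p * nrm q"
  unfolding nrm_def by (simp add: power2_eq_square algebra_simps)

lemma nrm_ge0: "nrm q \<ge> 0" unfolding nrm_def by simp

lemma nrm_eq0: "nrm q = 0 \<longleftrightarrow> q = 0"
  unfolding nrm_def by (auto intro!: quat_eqI simp: add_nonneg_eq_0_iff)

lemma quat_mult_eq_0: "p * q = 0 \<longleftrightarrow> p = 0 \<or> (q::quat) = 0"
  by (metis mult_zero_left mult_zero_right nrm_eq0 nrm_mult mult_eq_0_iff)

lemma qcnj_qcnj[simp]: "qcnj (qcnj p) = p" by (rule quat_eqI) simp_all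
lemma qcnj_mult: "qcnj (p * q) = qcnj q * qcnj p" by (rule quat_eqI) (simp_all add: algebra_simps)
lemma qcnj_add[simp]: "qcnj (p + q) = qcnj p + qcnj q" by (rule quat_eqI) simp_all
lemma qcnj_diff[simp]: "qcnj (p - q) = qcnj p - qcnj q" by (rule quat_eqI) simp_all
lemma qcnj_uminus[simp]: "qcnj (- q) = - qcnj q" by (rule quat_eqI) simp_all
lemma qcnj_scaleR[simp]: "qcnj (r *\<^sub>R q) = r *\<^sub>R qcnj q" by (rule quat_eqI) simp_all
lemma qcnj_0[simp]: "qcnj 0 = 0" by (rule quat_eqI) simp_all
lemma qcnj_1[simp]: "qcnj 1 = 1" by (rule quat_eqI) simp_all
lemma qcnj_of_real[simp]: "qcnj (of_real r) = of_real r" by (rule quat_eqI) (simp_all add: of_real_def)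
lemma of_real_comps[simp]: "qRe (of_real r) = r" "qI (of_real r) = 0" "qJ (of_real r) = 0" "qK (of_real r) = 0"
  by (simp_all add: of_real_def)
lemma cnj_mult_self: "qcnj p * p = of_real (nrm p)"
  by (rule quat_eqI) (simp_all add: nrm_def power2_eq_square algebra_simps)
lemma mult_cnj_self: "p * qcnj p = of_real (nrm p)"
  by (rule quat_eqI) (simp_all add: nrm_def power2_eq_square algebra_simps)
lemma qRe_commute: "qRe (p * q) = qRe (q * p)" by (simp add: algebra_simps)
lemma nrm_cnj[simp]: "nrm (qcnj p) = nrm p" by (simp add: nrm_def)
lemma nrm_scaleR[simp]: "nrm (r *\<^sub>R p) = r\<^sup>2 * nrm p" by (simp add: nrm_def power2_eq_square algebra_simps)
lemma nrm_1[simp]: "nrm 1 = 1" by (simp add: nrm_def)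
lemma nrm_0[simp]: "nrm 0 = 0" by (simp add: nrm_def)
lemma nrm_of_real[simp]: "nrm (of_real r) = r\<^sup>2" by (simp add: nrm_def)
lemma nrm_uminus[simp]: "nrm (- p) = nrm p" by (simp add: nrm_def)
lemma qabs_nrm: "qabs p = sqrt (nrm p)" by (simp add: qabs_def nrm_def)
lemma qabs_mult: "qabs (p * q) = qabs p * qabs q" by (simp add: qabs_nrm nrm_mult real_sqrt_mult)
lemma qabs_ge0: "qabs p \<ge> 0" using nrm_ge0[of p] by (simp add: qabs_nrm)
lemma qabs_sq: "(qabs p)\<^sup>2 = nrm p" by (simp add: qabs_nrm nrm_ge0)
lemma qabs_cnj[simp]: "qabs (qcnj p) = qabs p" by (simp add: qabs_nrm)
lemma qabs_eq0: "qabs p = 0 \<longleftrightarrow> p = 0" by (simp add: qabs_nrm nrm_eq0)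

lemma qRe_le_qabs: "qRe p \<le> qabs p"
proof -
  have "qRe p \<le> sqrt ((qRe p)\<^sup>2)" by simp
  also have "\<dots> \<le> qabs p" unfolding qabs_def by (rule real_sqrt_le_mono) simp
  finally show ?thesis .
qed

lemma qabs_triangle: "qabs (p + q) \<le> qabs p + qabs q"
proof -
  have cs: "qRe (qcnj p * q) \<le> qabs p * qabs q"
    using qRe_le_qabs[of "qcnj p * q"] by (simp add: qabs_mult)
  have "nrm (p + q) = nrm p + nrm q + 2 * qRe (qcnj p * q)"
    by (simp add: nrm_def power2_eq_square algebra_simps)
  also have "\<dots> \<le> (qabs p + qabs q)\<^sup>2"
    using cs by (simp add: power2_sum qabs_sq)
  finally have "sqrt (nrm (p + q)) \<le> sqrt ((qabs p + qabs q)\<^sup>2)" by (rule real_sqrt_le_mono)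
  then show ?thesis by (simp add: qabs_nrm[symmetric] qabs_ge0)
qed

definition FF :: "quat \<Rightarrow> quat \<Rightarrow> quat \<Rightarrow> quat \<Rightarrow> quat \<Rightarrow> quat \<Rightarrow> quat" where
  "FF a b c x1 x2 x3 = qcnj x1 * a * x2 + qcnj x2 * b * x3 + qcnj x1 * c * x3"

definition NN :: "quat \<Rightarrow> quat \<Rightarrow> quat \<Rightarrow> real" where
  "NN x1 x2 x3 = nrm x1 + nrm x2 + nrm x3"

lemma W_char:
  assumes "strictly_upper_triangular 3 A"
  shows "numerical_range 3 A = {FF (A 1 2) (A 2 3) (A 1 3) x1 x2 x3 | x1 x2 x3. NN x1 x2 x3 = 1}"
proof -
  have z: "A 1 1 = 0" "A 2 1 = 0" "A 2 2 = 0" "A 3 1 = 0" "A 3 2 = 0" "A 3 3 = 0"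
    using assms unfolding strictly_upper_triangular_def by auto
  have I: "{1..3::nat} = {1,2,3}" by auto
  have Q1: "Quat 1 0 0 0 = 1" by (simp add: one_quat_def)
  have e: "\<And>x::nat\<Rightarrow>quat. (\<Sum>i\<in>{1..3}. \<Sum>j\<in>{1..3}. qcnj (x i) * A i j * x j) = FF (A 1 2) (A 2 3) (A 1 3) (x 1) (x 2) (x 3)"
    unfolding I using z by (simp add: FF_def algebra_simps)
  have n: "\<And>x::nat\<Rightarrow>quat. (\<Sum>i\<in>{1..3}. qcnj (x i) * x i) = Quat 1 0 0 0 \<longleftrightarrow> NN (x 1) (x 2) (x 3) = 1"
  proof -
    fix x :: "nat \<Rightarrow> quat"
    have "(\<Sum>i\<in>{1..3}. qcnj (x i) * x i) = of_real (NN (x 1) (x 2) (x 3))"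
      unfolding I by (simp add: cnj_mult_self NN_def)
    then show "?thesis x" by (simp add: Q1)
  qed
  show ?thesis
  proof (rule set_eqI, rule iffI)
    fix q assume "q \<in> numerical_range 3 A"
    then obtain x where "q = (\<Sum>i\<in>{1..3}. \<Sum>j\<in>{1..3}. qcnj (x i) * A i j * x j)"
      "(\<Sum>i\<in>{1..3}. qcnj (x i) * x i) = Quat 1 0 0 0" unfolding numerical_range_def by blast
    then show "q \<in> {FF (A 1 2) (A 2 3) (A 1 3) x1 x2 x3 | x1 x2 x3. NN x1 x2 x3 = 1}"
      using e n by blast
  next
    fix q assume "q \<in> {FF (A 1 2) (A 2 3) (A 1 3) x1 x2 x3 | x1 x2 x3. NN x1 x2 x3 = 1}"
    then obtain x1 x2 x3 where q: "q = FF (A 1 2) (A 2 3) (A 1 3) x1 x2 x3" "NN x1 x2 x3 = 1" by blast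
    define x where "x = (\<lambda>i::nat. if i = 1 then x1 else if i = 2 then x2 else x3)"
    have xs: "x 1 = x1" "x 2 = x2" "x 3 = x3" by (simp_all add: x_def)
    have "q = (\<Sum>i\<in>{1..3}. \<Sum>j\<in>{1..3}. qcnj (x i) * A i j * x j) \<and> (\<Sum>i\<in>{1..3}. qcnj (x i) * x i) = Quat 1 0 0 0"
      unfolding e n xs using q by simp
    then show "q \<in> numerical_range 3 A" unfolding numerical_range_def by blast
  qed
qed


lemma cycle_char:
  assumes "strictly_upper_triangular 3 A"
  shows "cycle_free 3 A \<longleftrightarrow> (A 1 2 = 0 \<or> A 1 3 = 0 \<or> A 2 3 = 0)"
proof -
  have z: "A 1 1 = 0" "A 2 1 = 0" "A 2 2 = 0" "A 3 1 = 0" "A 3 2 = 0" "A 3 3 = 0"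
    using assms unfolding strictly_upper_triangular_def by auto
  have I: "{1..3::nat} = {1,2,3}" by auto
  have noloop: "\<not> (\<exists>i\<in>{1..3}. graph_adj A i i)"
    unfolding I graph_adj_def using z by auto
  have "(\<exists>vs. length vs \<ge> 3 \<and> distinct vs \<and> set vs \<subseteq> {1..3} \<and>
        (\<forall>k < length vs - 1. graph_adj A (vs ! k) (vs ! Suc k)) \<and>
        graph_adj A (last vs) (hd vs)) \<longleftrightarrow> (A 1 2 \<noteq> 0 \<and> A 1 3 \<noteq> 0 \<and> A 2 3 \<noteq> 0)"
  proof
    assume "\<exists>vs. length vs \<ge> 3 \<and> distinct vs \<and> set vs \<subseteq> {1..3} \<and>
        (\<forall>k < length vs - 1. graph_adj A (vs ! k) (vs ! Suc k)) \<and>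
        graph_adj A (last vs) (hd vs)"
    then obtain vs where v: "length vs \<ge> 3" "distinct vs" "set vs \<subseteq> {1,2,3}"
        "\<forall>k < length vs - 1. graph_adj A (vs ! k) (vs ! Suc k)" "graph_adj A (last vs) (hd vs)"
      unfolding I by blast
    have "length vs = card (set vs)" using v(2) by (simp add: distinct_card)
    also have "\<dots> \<le> card {1,2,3::nat}" using v(3) by (intro card_mono) auto
    finally have "length vs = 3" using v(1) by simp
    then obtain v0 v1 v2 where vs: "vs = [v0, v1, v2]"
      by (auto simp: length_Suc_conv numeral_3_eq_3)
    have e01: "graph_adj A v0 v1" using v(4) vs by (auto elim: allE[of _ 0])
    have e12: "graph_adj A v1 v2" using v(4) vs by (auto elim: allE[of _ 1])
    have e20: "graph_adj A v2 v0" using v(5) vs by simp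
    have d: "v0 \<noteq> v1" "v1 \<noteq> v2" "v0 \<noteq> v2" using v(2) vs by auto
    have r: "v0 \<in> {1,2,3}" "v1 \<in> {1,2,3}" "v2 \<in> {1,2,3}" using v(3) vs by auto
    show "A 1 2 \<noteq> 0 \<and> A 1 3 \<noteq> 0 \<and> A 2 3 \<noteq> 0"
      using e01 e12 e20 d r z unfolding graph_adj_def by auto
  next
    assume nz: "A 1 2 \<noteq> 0 \<and> A 1 3 \<noteq> 0 \<and> A 2 3 \<noteq> 0"
    have "\<forall>k < 2. graph_adj A ([1,2,3::nat] ! k) ([1,2,3] ! Suc k)"
      using nz by (auto simp: graph_adj_def less_2_cases_iff)
    moreover have "graph_adj A (last [1,2,3::nat]) (hd [1,2,3])" using nz by (simp add: graph_adj_def)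
    ultimately show "\<exists>vs. length vs \<ge> 3 \<and> distinct vs \<and> set vs \<subseteq> {1..3} \<and>
        (\<forall>k < length vs - 1. graph_adj A (vs ! k) (vs ! Suc k)) \<and>
        graph_adj A (last vs) (hd vs)"
      by (intro exI[of _ "[1,2,3]"]) auto
  qed
  then show ?thesis unfolding cycle_free_def has_cycle_def using noloop by blast
qed


lemma real_bd:
  fixes A B X Y Z :: real
  assumes "A \<ge> 0" "B \<ge> 0" "X \<ge> 0" "Y \<ge> 0" "Z \<ge> 0" "X\<^sup>2 + Y\<^sup>2 + Z\<^sup>2 = 1"
  shows "Y * (A * X + B * Z) \<le> sqrt (A\<^sup>2 + B\<^sup>2) / 2"
proof -
  define K where "K = sqrt (A\<^sup>2 + B\<^sup>2)"
  define W where "W = sqrt (X\<^sup>2 + Z\<^sup>2)"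
  have K0: "K \<ge> 0" and W0: "W \<ge> 0" by (simp_all add: K_def W_def)
  have "(A * X + B * Z)\<^sup>2 \<le> (A\<^sup>2 + B\<^sup>2) * (X\<^sup>2 + Z\<^sup>2)"
  proof -
    have "(A\<^sup>2 + B\<^sup>2) * (X\<^sup>2 + Z\<^sup>2) - (A * X + B * Z)\<^sup>2 = (A * Z - B * X)\<^sup>2"
      by (simp add: power2_eq_square algebra_simps)
    then show ?thesis using zero_le_power2[of "A * Z - B * X"] by linarith
  qed
  also have "\<dots> = (K * W)\<^sup>2" by (simp add: K_def W_def power_mult_distrib)
  finally have "A * X + B * Z \<le> K * W"
    using K0 W0 by (meson mult_nonneg_nonneg power2_le_imp_le)
  then have "Y * (A * X + B * Z) \<le> Y * (K * W)" using assms(4) by (rule mult_left_mono)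
  also have "\<dots> \<le> K * ((Y\<^sup>2 + W\<^sup>2) / 2)"
  proof -
    have "(Y\<^sup>2 + W\<^sup>2) - 2 * (Y * W) = (Y - W)\<^sup>2" by (simp add: power2_eq_square algebra_simps)
    then have "2 * (Y * W) \<le> (Y\<^sup>2 + W\<^sup>2)" using zero_le_power2[of "Y - W"] by linarith
    then have "Y * W \<le> (Y\<^sup>2 + W\<^sup>2) / 2" by simp
    then show ?thesis using K0 by (metis mult.left_commute mult_left_mono)
  qed
  also have "Y\<^sup>2 + W\<^sup>2 = 1" using assms(6) by (simp add: W_def)
  finally show ?thesis by (simp add: K_def)
qed

lemma gamma_mu:
  fixes h :: real
  assumes "0 \<le> h" "h \<le> 1/2"
  shows "\<exists>g m. g \<ge> 0 \<and> m \<ge> 0 \<and> g\<^sup>2 + m\<^sup>2 = 1 \<and> g * m = h"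
proof -
  define d where "d = sqrt (1 - 4 * h\<^sup>2)"
  have "(2 * h)\<^sup>2 \<le> 1\<^sup>2" by (rule power_mono) (use assms in auto)
  then have h4: "4 * h\<^sup>2 \<le> 1" by (simp add: power_mult_distrib)
  have d0: "d \<ge> 0" "d \<le> 1" "d\<^sup>2 = 1 - 4 * h\<^sup>2" using h4 assms by (simp_all add: d_def)
  define g where "g = sqrt ((1 + d) / 2)"
  define m where "m = sqrt ((1 - d) / 2)"
  have g2: "g\<^sup>2 = (1 + d) / 2" and m2: "m\<^sup>2 = (1 - d) / 2" using d0 by (simp_all add: g_def m_def)
  have gm1: "g * m = sqrt ((1 - d\<^sup>2) / 4)"
    unfolding g_def m_def by (simp add: real_sqrt_mult[symmetric] power2_eq_square algebra_simps)
  have "(1 - d\<^sup>2) / 4 = h\<^sup>2" using d0 by simp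
  then have gm2: "sqrt ((1 - d\<^sup>2) / 4) = h" using assms by simp
  have g0: "g \<ge> 0" and m0: "m \<ge> 0" using d0 by (simp_all add: g_def m_def)
  have "g\<^sup>2 + m\<^sup>2 = 1" using g2 m2 by simp
  then show ?thesis using g0 m0 gm1 gm2 by blast
qed

lemma surj_core:
  fixes P Q K t :: real
  assumes "K > 0" "P \<ge> 0" "Q \<ge> 0" "P\<^sup>2 + Q\<^sup>2 = K\<^sup>2" "0 \<le> t" "t \<le> K / 2"
  shows "\<exists>\<alpha> \<beta> \<gamma>. \<alpha>\<^sup>2 + \<beta>\<^sup>2 + \<gamma>\<^sup>2 = 1 \<and> \<gamma> * (\<alpha> * P + \<beta> * Q) = t"
proof -
  obtain g m where gm: "g\<^sup>2 + m\<^sup>2 = 1" "g * m = t / K"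
    using gamma_mu[of "t / K"] assms by (auto simp: field_simps)
  have "(m * P / K)\<^sup>2 + (m * Q / K)\<^sup>2 + g\<^sup>2 = m\<^sup>2 * ((P\<^sup>2 + Q\<^sup>2) / K\<^sup>2) + g\<^sup>2"
    by (simp add: power_divide power_mult_distrib algebra_simps add_divide_distrib)
  also have "\<dots> = 1" using assms gm by simp
  moreover have "g * ((m * P / K) * P + (m * Q / K) * Q) = (g * m) * ((P\<^sup>2 + Q\<^sup>2) / K)"
    by (simp add: power2_eq_square algebra_simps add_divide_distrib)
  moreover have "\<dots> = t" using gm assms by (simp add: power2_eq_square)
  ultimately show ?thesis by metis
qed

definition hat :: "quat \<Rightarrow> quat" where
  "hat a = (if a = 0 then 1 else (1 / qabs a) *\<^sub>R a)"

lemma hat_props: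
  "nrm (hat a) = 1" "qcnj (hat a) * a = of_real (qabs a)" "a * qcnj (hat a) = of_real (qabs a)"
  "qabs a *\<^sub>R hat a = a"
proof -
  show "nrm (hat a) = 1"
  proof (cases "a = 0")
    case False
    then have "nrm a > 0" using nrm_ge0[of a] nrm_eq0[of a] by linarith
    then show ?thesis using False by (simp add: hat_def qabs_nrm power_divide)
  qed (simp add: hat_def)
  show "qcnj (hat a) * a = of_real (qabs a)"
  proof (cases "a = 0")
    case False
    then have "nrm a > 0" using nrm_ge0[of a] nrm_eq0[of a] by linarith
    then show ?thesis using False
      by (simp add: hat_def cnj_mult_self qabs_nrm scaleR_conv_of_real[symmetric] of_real_def) (metis real_sqrt_pow2 less_imp_le power2_eq_square nonzero_mult_div_cancel_left real_sqrt_gt_0_iff less_numeral_extra(3) times_divide_eq_right)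
  qed (simp add: hat_def qabs_nrm)
  show "a * qcnj (hat a) = of_real (qabs a)"
  proof (cases "a = 0")
    case False
    then have "nrm a > 0" using nrm_ge0[of a] nrm_eq0[of a] by linarith
    then show ?thesis using False
      by (simp add: hat_def mult_cnj_self qabs_nrm scaleR_conv_of_real[symmetric] of_real_def) (metis real_sqrt_pow2 less_imp_le power2_eq_square nonzero_mult_div_cancel_left real_sqrt_gt_0_iff less_numeral_extra(3) times_divide_eq_right)
  qed (simp add: hat_def qabs_nrm)
  show "qabs a *\<^sub>R hat a = a"
    by (cases "a = 0") (simp_all add: hat_def qabs_eq0)
qed


lemma hat_more[simp]: "a * (qcnj (hat a) * p) = qabs a *\<^sub>R p" "qcnj (hat a) * (a * p) = qabs a *\<^sub>R p"
  "qcnj (hat a) * a = of_real (qabs a)" "a * qcnj (hat a) = of_real (qabs a)" "nrm (hat a) = 1"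
  by (simp_all add: hat_props mult.assoc[symmetric] scaleR_conv_of_real)

lemma of_real_mult_quat[simp]: "p * of_real t = t *\<^sub>R (p::quat)" "of_real t * p = t *\<^sub>R (p::quat)"
  by (simp_all add: of_real_def)

lemma disk_intro:
  assumes "r \<ge> 0" "\<And>x1 x2 x3. NN x1 x2 x3 = 1 \<Longrightarrow> qabs (FF a b c x1 x2 x3) \<le> r"
    "\<And>q. qabs q \<le> r \<Longrightarrow> \<exists>x1 x2 x3. NN x1 x2 x3 = 1 \<and> FF a b c x1 x2 x3 = q"
  shows "closed_disk_origin {FF a b c x1 x2 x3 | x1 x2 x3. NN x1 x2 x3 = 1}"
  unfolding closed_disk_origin_def
proof (intro exI[of _ r] conjI)
  show "{FF a b c x1 x2 x3 | x1 x2 x3. NN x1 x2 x3 = 1} = {q. qabs q \<le> r}"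
    using assms(2,3) by fastforce
qed (rule assms(1))

lemma NN_100: "NN 1 0 0 = 1" and FF_100: "FF a b c 1 0 0 = 0"
  by (simp_all add: NN_def FF_def)

lemma NN_qabs: "NN x1 x2 x3 = (qabs x1)\<^sup>2 + (qabs x2)\<^sup>2 + (qabs x3)\<^sup>2"
  by (simp add: NN_def qabs_sq)

lemma K_zero:
  assumes "qabs q \<le> sqrt ((qabs a)\<^sup>2 + (qabs b)\<^sup>2) / 2" "sqrt ((qabs a)\<^sup>2 + (qabs b)\<^sup>2) = 0"
  shows "q = 0"
  using assms qabs_ge0[of q] qabs_eq0[of q] by simp

lemma disk_c0: "closed_disk_origin {FF a b 0 x1 x2 x3 | x1 x2 x3. NN x1 x2 x3 = 1}"
proof (rule disk_intro[of "sqrt ((qabs a)\<^sup>2 + (qabs b)\<^sup>2) / 2"])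
  fix x1 x2 x3 assume n: "NN x1 x2 x3 = 1"
  have "qabs (FF a b 0 x1 x2 x3) \<le> qabs (qcnj x1 * a * x2) + qabs (qcnj x2 * b * x3)"
    by (simp add: FF_def qabs_triangle)
  also have "\<dots> = qabs x2 * (qabs a * qabs x1 + qabs b * qabs x3)"
    by (simp add: qabs_mult algebra_simps)
  also have "\<dots> \<le> sqrt ((qabs a)\<^sup>2 + (qabs b)\<^sup>2) / 2"
    by (rule real_bd) (use n in \<open>simp_all add: qabs_ge0 NN_qabs\<close>)
  finally show "qabs (FF a b 0 x1 x2 x3) \<le> sqrt ((qabs a)\<^sup>2 + (qabs b)\<^sup>2) / 2" .
next
  fix q assume q: "qabs q \<le> sqrt ((qabs a)\<^sup>2 + (qabs b)\<^sup>2) / 2"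
  define K where "K = sqrt ((qabs a)\<^sup>2 + (qabs b)\<^sup>2)"
  show "\<exists>x1 x2 x3. NN x1 x2 x3 = 1 \<and> FF a b 0 x1 x2 x3 = q"
  proof (cases "K = 0")
    case True
    then have "q = 0" using K_zero[OF q] by (simp add: K_def)
    then show ?thesis using NN_100 FF_100 by blast
  next
    case False
    have "K \<ge> 0" unfolding K_def by simp
    then have K: "K > 0" using False by linarith
    obtain \<alpha> \<beta> \<gamma> where abg: "\<alpha>\<^sup>2 + \<beta>\<^sup>2 + \<gamma>\<^sup>2 = 1" "\<gamma> * (\<alpha> * qabs a + \<beta> * qabs b) = qabs q"
      using surj_core[OF K qabs_ge0 qabs_ge0 _ qabs_ge0 q[folded K_def], of a b] by (simp add: K_def) blast
    define u where "u = hat q"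
    define x1 where "x1 = \<alpha> *\<^sub>R (hat a * qcnj u)"
    define x2 where "x2 = \<gamma> *\<^sub>R (1::quat)"
    define x3 where "x3 = \<beta> *\<^sub>R (qcnj (hat b) * u)"
    have N: "NN x1 x2 x3 = \<alpha>\<^sup>2 + \<gamma>\<^sup>2 + \<beta>\<^sup>2"
      by (simp add: NN_def x1_def x2_def x3_def nrm_mult u_def)
    have F1: "FF a b 0 x1 x2 x3 = (\<gamma> * (\<alpha> * qabs a + \<beta> * qabs b)) *\<^sub>R u"
      by (simp add: FF_def x1_def x2_def x3_def qcnj_mult mult.assoc algebra_simps)
    have qq: "qabs q *\<^sub>R u = q" by (simp add: u_def hat_props)
    have "FF a b 0 x1 x2 x3 = q" using F1 unfolding abg(2) qq by assumption
    moreover have "NN x1 x2 x3 = 1" using N abg(1) by simp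
    ultimately show ?thesis by blast
  qed
qed (simp add: qabs_ge0)

lemma disk_a0: "closed_disk_origin {FF 0 b c x1 x2 x3 | x1 x2 x3. NN x1 x2 x3 = 1}"
proof (rule disk_intro[of "sqrt ((qabs b)\<^sup>2 + (qabs c)\<^sup>2) / 2"])
  fix x1 x2 x3 assume n: "NN x1 x2 x3 = 1"
  have "qabs (FF 0 b c x1 x2 x3) \<le> qabs (qcnj x2 * b * x3) + qabs (qcnj x1 * c * x3)"
    by (simp add: FF_def qabs_triangle)
  also have "\<dots> = qabs x3 * (qabs b * qabs x2 + qabs c * qabs x1)"
    by (simp add: qabs_mult algebra_simps)
  also have "\<dots> \<le> sqrt ((qabs b)\<^sup>2 + (qabs c)\<^sup>2) / 2"
    by (rule real_bd) (use n in \<open>simp_all add: qabs_ge0 NN_qabs algebra_simps\<close>)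
  finally show "qabs (FF 0 b c x1 x2 x3) \<le> sqrt ((qabs b)\<^sup>2 + (qabs c)\<^sup>2) / 2" .
next
  fix q assume q: "qabs q \<le> sqrt ((qabs b)\<^sup>2 + (qabs c)\<^sup>2) / 2"
  define K where "K = sqrt ((qabs b)\<^sup>2 + (qabs c)\<^sup>2)"
  show "\<exists>x1 x2 x3. NN x1 x2 x3 = 1 \<and> FF 0 b c x1 x2 x3 = q"
  proof (cases "K = 0")
    case True
    then have "q = 0" using K_zero[OF q] by (simp add: K_def)
    then show ?thesis using NN_100 FF_100 by blast
  next
    case False
    have "K \<ge> 0" unfolding K_def by simp
    then have K: "K > 0" using False by linarith
    obtain \<alpha> \<beta> \<gamma> where abg: "\<alpha>\<^sup>2 + \<beta>\<^sup>2 + \<gamma>\<^sup>2 = 1" "\<gamma> * (\<alpha> * qabs b + \<beta> * qabs c) = qabs q"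
      using surj_core[OF K qabs_ge0 qabs_ge0 _ qabs_ge0 q[folded K_def], of b c] by (simp add: K_def) blast
    define u where "u = hat q"
    define x2 where "x2 = \<alpha> *\<^sub>R hat b"
    define x1 where "x1 = \<beta> *\<^sub>R hat c"
    define x3 where "x3 = \<gamma> *\<^sub>R u"
    have N: "NN x1 x2 x3 = \<beta>\<^sup>2 + \<alpha>\<^sup>2 + \<gamma>\<^sup>2"
      by (simp add: NN_def x1_def x2_def x3_def nrm_mult u_def)
    have F1: "FF 0 b c x1 x2 x3 = (\<gamma> * (\<alpha> * qabs b + \<beta> * qabs c)) *\<^sub>R u"
      by (simp add: FF_def x1_def x2_def x3_def qcnj_mult mult.assoc algebra_simps)
    have qq: "qabs q *\<^sub>R u = q" by (simp add: u_def hat_props)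
    have "FF 0 b c x1 x2 x3 = q" using F1 unfolding abg(2) qq by assumption
    moreover have "NN x1 x2 x3 = 1" using N abg(1) by simp
    ultimately show ?thesis by blast
  qed
qed (simp add: qabs_ge0)

lemma disk_b0: "closed_disk_origin {FF a 0 c x1 x2 x3 | x1 x2 x3. NN x1 x2 x3 = 1}"
proof (rule disk_intro[of "sqrt ((qabs a)\<^sup>2 + (qabs c)\<^sup>2) / 2"])
  fix x1 x2 x3 assume n: "NN x1 x2 x3 = 1"
  have "qabs (FF a 0 c x1 x2 x3) \<le> qabs (qcnj x1 * a * x2) + qabs (qcnj x1 * c * x3)"
    by (simp add: FF_def qabs_triangle)
  also have "\<dots> = qabs x1 * (qabs a * qabs x2 + qabs c * qabs x3)"
    by (simp add: qabs_mult algebra_simps)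
  also have "\<dots> \<le> sqrt ((qabs a)\<^sup>2 + (qabs c)\<^sup>2) / 2"
    by (rule real_bd) (use n in \<open>simp_all add: qabs_ge0 NN_qabs algebra_simps\<close>)
  finally show "qabs (FF a 0 c x1 x2 x3) \<le> sqrt ((qabs a)\<^sup>2 + (qabs c)\<^sup>2) / 2" .
next
  fix q assume q: "qabs q \<le> sqrt ((qabs a)\<^sup>2 + (qabs c)\<^sup>2) / 2"
  define K where "K = sqrt ((qabs a)\<^sup>2 + (qabs c)\<^sup>2)"
  show "\<exists>x1 x2 x3. NN x1 x2 x3 = 1 \<and> FF a 0 c x1 x2 x3 = q"
  proof (cases "K = 0")
    case True
    then have "q = 0" using K_zero[OF q] by (simp add: K_def)
    then show ?thesis using NN_100 FF_100 by blast
  next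
    case False
    have "K \<ge> 0" unfolding K_def by simp
    then have K: "K > 0" using False by linarith
    obtain \<alpha> \<beta> \<gamma> where abg: "\<alpha>\<^sup>2 + \<beta>\<^sup>2 + \<gamma>\<^sup>2 = 1" "\<gamma> * (\<alpha> * qabs a + \<beta> * qabs c) = qabs q"
      using surj_core[OF K qabs_ge0 qabs_ge0 _ qabs_ge0 q[folded K_def], of a c] by (simp add: K_def) blast
    define u where "u = hat q"
    define x1 where "x1 = \<gamma> *\<^sub>R qcnj u"
    define x2 where "x2 = \<alpha> *\<^sub>R qcnj (hat a)"
    define x3 where "x3 = \<beta> *\<^sub>R qcnj (hat c)"
    have N: "NN x1 x2 x3 = \<gamma>\<^sup>2 + \<alpha>\<^sup>2 + \<beta>\<^sup>2"
      by (simp add: NN_def x1_def x2_def x3_def nrm_mult u_def)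
    have F1: "FF a 0 c x1 x2 x3 = (\<gamma> * (\<alpha> * qabs a + \<beta> * qabs c)) *\<^sub>R u"
      by (simp add: FF_def x1_def x2_def x3_def qcnj_mult mult.assoc algebra_simps)
    have qq: "qabs q *\<^sub>R u = q" by (simp add: u_def hat_props)
    have "FF a 0 c x1 x2 x3 = q" using F1 unfolding abg(2) qq by assumption
    moreover have "NN x1 x2 x3 = 1" using N abg(1) by simp
    ultimately show ?thesis by blast
  qed
qed (simp add: qabs_ge0)


lemma quad0:
  fixes L M :: real
  assumes "\<And>t. t * L + t\<^sup>2 * M \<le> 0" "L \<ge> 0"
  shows "L = 0"
proof (rule ccontr)
  assume "L \<noteq> 0"
  then have L: "L > 0" using assms(2) by simp
  define t where "t = L / (\<bar>M\<bar> + 1)"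
  have t: "t > 0" using L by (simp add: t_def)
  have "t * \<bar>M\<bar> < L" using L by (simp add: t_def field_simps)
  then have "t * (t * \<bar>M\<bar>) < t * L" using t by simp
  moreover have "t\<^sup>2 * (- \<bar>M\<bar>) \<le> t\<^sup>2 * M" by (rule mult_left_mono) auto
  moreover have "t\<^sup>2 * (- \<bar>M\<bar>) = - (t * (t * \<bar>M\<bar>))" by (simp add: power2_eq_square)
  ultimately show False using assms(1)[of t] by linarith
qed

lemma qRe_T1: "qRe (qcnj u * v * a * y) = qRe (qcnj v * (u * qcnj y * qcnj a))"
  by (simp add: algebra_simps)
lemma qRe_T2: "qRe (p * x) = qRe (x * p)"
  by (simp add: algebra_simps)

definition VV1 where "VV1 a c u r y1 y2 y3 = u * qcnj y2 * qcnj a + u * qcnj y3 * qcnj c - (2*r) *\<^sub>R qcnj y1"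
definition VV2 where "VV2 a b u r y1 y2 y3 = qcnj u * qcnj y1 * a + u * qcnj y3 * qcnj b - (2*r) *\<^sub>R qcnj y2"
definition VV3 where "VV3 b c u r y1 y2 y3 = qcnj u * qcnj y2 * b + qcnj u * qcnj y1 * c - (2*r) *\<^sub>R qcnj y3"

lemma qRe_cnj_self: "qRe (qcnj v * v) = nrm v"
  by (simp add: cnj_mult_self)

lemma FF_expand: "FF a b c (y1 + t *\<^sub>R x1) (y2 + t *\<^sub>R x2) (y3 + t *\<^sub>R x3) =
   FF a b c y1 y2 y3 + t *\<^sub>R (qcnj x1 * a * y2 + qcnj y1 * a * x2 + qcnj x2 * b * y3 + qcnj y2 * b * x3
      + qcnj x1 * c * y3 + qcnj y1 * c * x3) + (t * t) *\<^sub>R FF a b c x1 x2 x3"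
  by (simp add: FF_def algebra_simps scaleR_add_right)

lemma NN_expand: "NN (y1 + t *\<^sub>R x1) (y2 + t *\<^sub>R x2) (y3 + t *\<^sub>R x3) =
   NN y1 y2 y3 + 2 * t * (qRe (qcnj y1 * x1) + qRe (qcnj y2 * x2) + qRe (qcnj y3 * x3)) + t\<^sup>2 * NN x1 x2 x3"
  by (simp add: NN_def nrm_def power2_eq_square algebra_simps)

lemma key_identity:
  "qRe (qcnj u * (qcnj x1 * a * y2 + qcnj y1 * a * x2 + qcnj x2 * b * y3 + qcnj y2 * b * x3
      + qcnj x1 * c * y3 + qcnj y1 * c * x3)) - 2 * r * (qRe (qcnj y1 * x1) + qRe (qcnj y2 * x2) + qRe (qcnj y3 * x3))
   = qRe (x1 * VV1 a c u r y1 y2 y3) + qRe (x2 * VV2 a b u r y1 y2 y3) + qRe (x3 * VV3 b c u r y1 y2 y3)"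
proof -
  have e1: "qRe (qcnj u * (qcnj x1 * a * y2)) = qRe (x1 * (u * qcnj y2 * qcnj a))"
    using qRe_T1[of u "qcnj x1" a y2] by (simp add: mult.assoc)
  have e2: "qRe (qcnj u * (qcnj y1 * a * x2)) = qRe (x2 * (qcnj u * qcnj y1 * a))"
    using qRe_T2[of "qcnj u * qcnj y1 * a" x2] by (simp add: mult.assoc)
  have e3: "qRe (qcnj u * (qcnj x2 * b * y3)) = qRe (x2 * (u * qcnj y3 * qcnj b))"
    using qRe_T1[of u "qcnj x2" b y3] by (simp add: mult.assoc)
  have e4: "qRe (qcnj u * (qcnj y2 * b * x3)) = qRe (x3 * (qcnj u * qcnj y2 * b))"
    using qRe_T2[of "qcnj u * qcnj y2 * b" x3] by (simp add: mult.assoc)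
  have e5: "qRe (qcnj u * (qcnj x1 * c * y3)) = qRe (x1 * (u * qcnj y3 * qcnj c))"
    using qRe_T1[of u "qcnj x1" c y3] by (simp add: mult.assoc)
  have e6: "qRe (qcnj u * (qcnj y1 * c * x3)) = qRe (x3 * (qcnj u * qcnj y1 * c))"
    using qRe_T2[of "qcnj u * qcnj y1 * c" x3] by (simp add: mult.assoc)
  have d: "qRe (qcnj y1 * x1) = qRe (x1 * qcnj y1)" "qRe (qcnj y2 * x2) = qRe (x2 * qcnj y2)"
    "qRe (qcnj y3 * x3) = qRe (x3 * qcnj y3)" using qRe_T2 by blast+
  have lin: "\<And>p q. qRe (p + q) = qRe p + qRe q" "\<And>p q. qRe (p - q) = qRe p - qRe q"
    "\<And>s p. qRe (s *\<^sub>R p) = s * qRe p" by simp_all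
  show ?thesis
    unfolding VV1_def VV2_def VV3_def distrib_left right_diff_distrib mult_scaleR_right
      distrib_left[of "qcnj u"] lin e1 e2 e3 e4 e5 e6 d
    by (simp only: algebra_simps)
qed


lemma foc:
  assumes H: "\<And>z1 z2 z3. qRe (qcnj u * FF a b c z1 z2 z3) \<le> r * NN z1 z2 z3"
    and E: "qRe (qcnj u * FF a b c y1 y2 y3) = r * NN y1 y2 y3"
  shows "VV1 a c u r y1 y2 y3 = 0 \<and> VV2 a b u r y1 y2 y3 = 0 \<and> VV3 b c u r y1 y2 y3 = 0"
proof -
  define V1 where "V1 = VV1 a c u r y1 y2 y3"
  define V2 where "V2 = VV2 a b u r y1 y2 y3"
  define V3 where "V3 = VV3 b c u r y1 y2 y3"
  define x1 where "x1 = qcnj V1"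
  define x2 where "x2 = qcnj V2"
  define x3 where "x3 = qcnj V3"
  define BB where "BB = qcnj x1 * a * y2 + qcnj y1 * a * x2 + qcnj x2 * b * y3 + qcnj y2 * b * x3
      + qcnj x1 * c * y3 + qcnj y1 * c * x3"
  define DD where "DD = qRe (qcnj y1 * x1) + qRe (qcnj y2 * x2) + qRe (qcnj y3 * x3)"
  define L where "L = nrm V1 + nrm V2 + nrm V3"
  define M where "M = qRe (qcnj u * FF a b c x1 x2 x3) - r * NN x1 x2 x3"
  have key: "qRe (qcnj u * BB) - 2 * r * DD = L"
    using key_identity[of u x1 a y2 y1 x2 b y3 x3 c r] unfolding BB_def DD_def L_def
    by (simp only: x1_def x2_def x3_def V1_def V2_def V3_def qcnj_qcnj qRe_cnj_self)
  have "\<And>t. t * L + t\<^sup>2 * M \<le> 0"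
  proof -
    fix t :: real
    have "qRe (qcnj u * FF a b c (y1 + t *\<^sub>R x1) (y2 + t *\<^sub>R x2) (y3 + t *\<^sub>R x3))
        = qRe (qcnj u * FF a b c y1 y2 y3) + t * qRe (qcnj u * BB) + (t * t) * qRe (qcnj u * FF a b c x1 x2 x3)"
      unfolding FF_expand BB_def[symmetric] distrib_left mult_scaleR_right quat_comps2(1) quat_comps5(1) ..
    moreover have "NN (y1 + t *\<^sub>R x1) (y2 + t *\<^sub>R x2) (y3 + t *\<^sub>R x3) = NN y1 y2 y3 + 2 * t * DD + t\<^sup>2 * NN x1 x2 x3"
      unfolding NN_expand DD_def ..
    ultimately have "qRe (qcnj u * FF a b c y1 y2 y3) + t * qRe (qcnj u * BB) + (t * t) * qRe (qcnj u * FF a b c x1 x2 x3)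
        \<le> r * (NN y1 y2 y3 + 2 * t * DD + t\<^sup>2 * NN x1 x2 x3)"
      using H[of "y1 + t *\<^sub>R x1" "y2 + t *\<^sub>R x2" "y3 + t *\<^sub>R x3"] by simp
    then have "t * (qRe (qcnj u * BB) - 2 * r * DD) + t\<^sup>2 * M \<le> 0"
      using E unfolding M_def by (simp add: algebra_simps power2_eq_square)
    then show "t * L + t\<^sup>2 * M \<le> 0" using key by simp
  qed
  then have "L = 0" by (rule quad0) (simp add: L_def nrm_ge0 add_nonneg_nonneg)
  then have "nrm V1 = 0" "nrm V2 = 0" "nrm V3 = 0" unfolding L_def
    using nrm_ge0[of V1] nrm_ge0[of V2] nrm_ge0[of V3] by linarith+
  then show ?thesis by (simp add: nrm_eq0 V1_def V2_def V3_def)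
qed


lemma mult_cnj_assoc[simp]: "a * (qcnj a * p) = nrm a *\<^sub>R p" "qcnj a * (a * p) = nrm a *\<^sub>R p"
  by (simp_all add: mult.assoc[symmetric] mult_cnj_self cnj_mult_self)

lemma nrm_add: "nrm (p + q) = nrm p + nrm q + 2 * qRe (p * qcnj q)"
  by (simp add: nrm_def power2_eq_square algebra_simps)

lemma VV_conj:
  assumes "VV1 a c u r y1 y2 y3 = 0" "VV2 a b u r y1 y2 y3 = 0" "VV3 b c u r y1 y2 y3 = 0"
  shows "a * (y2 * qcnj u) + c * (y3 * qcnj u) = (2 * r) *\<^sub>R y1"
    "qcnj a * (y1 * u) + b * (y3 * qcnj u) = (2 * r) *\<^sub>R y2"
    "qcnj b * (y2 * u) + qcnj c * (y1 * u) = (2 * r) *\<^sub>R y3"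
proof -
  have "qcnj (VV1 a c u r y1 y2 y3) = 0" "qcnj (VV2 a b u r y1 y2 y3) = 0" "qcnj (VV3 b c u r y1 y2 y3) = 0"
    using assms by simp_all
  then show "a * (y2 * qcnj u) + c * (y3 * qcnj u) = (2 * r) *\<^sub>R y1"
    "qcnj a * (y1 * u) + b * (y3 * qcnj u) = (2 * r) *\<^sub>R y2"
    "qcnj b * (y2 * u) + qcnj c * (y1 * u) = (2 * r) *\<^sub>R y3"
    by (simp_all add: VV1_def VV2_def VV3_def qcnj_mult mult.assoc)
qed

lemma real_case:
  fixes R \<sigma> :: real
  assumes s: "\<sigma> * \<sigma> = 1" and R: "R > 0" and n: "NN y1 y2 y3 = 1"
    and Z1: "\<sigma> *\<^sub>R (a * y2) + \<sigma> *\<^sub>R (c * y3) = R *\<^sub>R y1"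
    and Z2: "\<sigma> *\<^sub>R (qcnj a * y1) + \<sigma> *\<^sub>R (b * y3) = R *\<^sub>R y2"
    and Z3: "\<sigma> *\<^sub>R (qcnj b * y2) + \<sigma> *\<^sub>R (qcnj c * y1) = R *\<^sub>R y3"
  shows "(R * R - nrm a) * (R * R - nrm b) = nrm a * nrm b + R * R * nrm c + 2 * \<sigma> * R * qRe (a * b * qcnj c)"
proof -
  define m where "m = a * b + (\<sigma> * R) *\<^sub>R c"
  have qm: "qcnj m = qcnj b * qcnj a + (\<sigma> * R) *\<^sub>R qcnj c" by (simp add: m_def qcnj_mult)
  have D1: "(R * R - nrm a) *\<^sub>R y1 = m * y3"
  proof -
    have "(R * R) *\<^sub>R y1 = R *\<^sub>R (R *\<^sub>R y1)" by simp
    also have "\<dots> = \<sigma> *\<^sub>R (a * (R *\<^sub>R y2)) + (\<sigma> * R) *\<^sub>R (c * y3)"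
      unfolding Z1[symmetric] by (simp add: algebra_simps)
    also have "\<dots> = (\<sigma> * \<sigma>) *\<^sub>R (a * (qcnj a * y1)) + (\<sigma> * \<sigma>) *\<^sub>R (a * (b * y3)) + (\<sigma> * R) *\<^sub>R (c * y3)"
      unfolding Z2[symmetric] by (simp add: algebra_simps)
    also have "\<dots> = nrm a *\<^sub>R y1 + m * y3"
      unfolding s m_def by (simp add: algebra_simps)
    finally show ?thesis by (simp add: algebra_simps)
  qed
  have D2: "(R * R - nrm b) *\<^sub>R y3 = qcnj m * y1"
  proof -
    have "(R * R) *\<^sub>R y3 = R *\<^sub>R (R *\<^sub>R y3)" by simp
    also have "\<dots> = \<sigma> *\<^sub>R (qcnj b * (R *\<^sub>R y2)) + (\<sigma> * R) *\<^sub>R (qcnj c * y1)"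
      unfolding Z3[symmetric] by (simp add: algebra_simps)
    also have "\<dots> = (\<sigma> * \<sigma>) *\<^sub>R (qcnj b * (qcnj a * y1)) + (\<sigma> * \<sigma>) *\<^sub>R (qcnj b * (b * y3)) + (\<sigma> * R) *\<^sub>R (qcnj c * y1)"
      unfolding Z2[symmetric] by (simp add: algebra_simps)
    also have "\<dots> = nrm b *\<^sub>R y3 + qcnj m * y1"
      unfolding s qm by (simp add: algebra_simps)
    finally show ?thesis by (simp add: algebra_simps)
  qed
  define \<alpha> where "\<alpha> = R * R - nrm a"
  define \<beta> where "\<beta> = R * R - nrm b"
  have A1: "(\<alpha> * \<beta>) *\<^sub>R y1 = nrm m *\<^sub>R y1"
  proof -
    have "(\<alpha> * \<beta>) *\<^sub>R y1 = \<beta> *\<^sub>R (\<alpha> *\<^sub>R y1)" by (simp add: algebra_simps)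
    also have "\<dots> = m * (\<beta> *\<^sub>R y3)" using D1 by (simp add: \<alpha>_def)
    also have "\<dots> = nrm m *\<^sub>R y1" using D2 by (simp add: \<beta>_def)
    finally show ?thesis .
  qed
  have A3: "(\<alpha> * \<beta>) *\<^sub>R y3 = nrm m *\<^sub>R y3"
  proof -
    have "(\<alpha> * \<beta>) *\<^sub>R y3 = \<alpha> *\<^sub>R (\<beta> *\<^sub>R y3)" by (simp add: algebra_simps)
    also have "\<dots> = qcnj m * (\<alpha> *\<^sub>R y1)" using D2 by (simp add: \<beta>_def)
    also have "\<dots> = nrm m *\<^sub>R y3" using D1 by (simp add: \<alpha>_def)
    finally show ?thesis .
  qed
  have "\<alpha> * \<beta> = nrm m"
  proof (rule ccontr)
    assume ne: "\<alpha> * \<beta> \<noteq> nrm m"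
    have "y1 = 0" using A1 ne by (metis scaleR_cancel_right)
    moreover have "y3 = 0" using A3 ne by (metis scaleR_cancel_right)
    ultimately have "R *\<^sub>R y2 = 0" using Z2 by simp
    then have "y2 = 0" using R by simp
    then show False using n \<open>y1 = 0\<close> \<open>y3 = 0\<close> by (simp add: NN_def)
  qed
  moreover have "nrm m = nrm a * nrm b + R * R * nrm c + 2 * \<sigma> * R * qRe (a * b * qcnj c)"
  proof -
    have "nrm ((\<sigma> * R) *\<^sub>R c) = R * R * nrm c"
      by (simp add: power2_eq_square) (metis s mult.assoc mult.commute mult_1)
    moreover have "qRe (a * b * qcnj ((\<sigma> * R) *\<^sub>R c)) = \<sigma> * R * qRe (a * b * qcnj c)"
      by (simp add: algebra_simps)
    ultimately show ?thesis unfolding m_def nrm_add by (simp add: nrm_mult)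
  qed
  ultimately show ?thesis by (simp add: \<alpha>_def \<beta>_def)
qed


definition ii :: quat where "ii = Quat 0 1 0 0"

lemma ii_props[simp]: "qcnj ii = - ii" "p * (ii * ii) = - p" "ii * ii = -1" "nrm ii = 1"
  by (rule quat_eqI; simp add: ii_def)+ (simp add: ii_def nrm_def)

lemma cnj_neg_of_re0: "qRe g = 0 \<Longrightarrow> qcnj g = - g"
  by (rule quat_eqI) simp_all

lemma qcnj_eq_0[simp]: "qcnj p = 0 \<longleftrightarrow> p = 0" by (metis qcnj_qcnj qcnj_0)

lemma neg_self_quat: assumes "- x = (x::quat)" shows "x = 0"
  using arg_cong[OF assms, of qRe] arg_cong[OF assms, of qI] arg_cong[OF assms, of qJ] arg_cong[OF assms, of qK]
  by (intro quat_eqI) simp_all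

lemma imag_case:
  fixes R :: real
  assumes R: "R > 0" and n: "NN y1 y2 y3 = 1" and nz: "a \<noteq> 0" "b \<noteq> 0" "c \<noteq> 0"
    and S: "R * R = nrm a + nrm b + nrm c" and G: "qRe (a * b * qcnj c) = 0"
    and Z1: "a * (y2 * qcnj ii) + c * (y3 * qcnj ii) = R *\<^sub>R y1"
    and Z2: "qcnj a * (y1 * ii) + b * (y3 * qcnj ii) = R *\<^sub>R y2"
    and Z3: "qcnj b * (y2 * ii) + qcnj c * (y1 * ii) = R *\<^sub>R y3"
  shows False
proof -
  define P where "P = y1 * ii"
  define T where "T = y3 * ii"
  have PT: "P * ii = - y1" "T * ii = - y3" by (simp_all add: P_def T_def mult.assoc)
  have W1: "a * y2 + c * y3 = R *\<^sub>R P"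
  proof -
    have "(a * (y2 * qcnj ii) + c * (y3 * qcnj ii)) * ii = (R *\<^sub>R y1) * ii" using Z1 by simp
    then show ?thesis by (simp add: P_def algebra_simps)
  qed
  have W2: "qcnj a * P - b * T = R *\<^sub>R y2" using Z2 by (simp add: P_def T_def)
  have W3: "qcnj b * (y2 * ii) + qcnj c * P = R *\<^sub>R y3" using Z3 by (simp add: P_def)
  define \<alpha> where "\<alpha> = R * R - nrm a"
  define \<beta> where "\<beta> = R * R - nrm b"
  have D1: "\<alpha> *\<^sub>R P = - (a * (b * T)) + R *\<^sub>R (c * y3)"
  proof -
    have "(R * R) *\<^sub>R P = R *\<^sub>R (R *\<^sub>R P)" by simp
    also have "\<dots> = a * (R *\<^sub>R y2) + R *\<^sub>R (c * y3)"
      unfolding W1[symmetric] by (simp add: algebra_simps)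
    also have "\<dots> = nrm a *\<^sub>R P - a * (b * T) + R *\<^sub>R (c * y3)"
      unfolding W2[symmetric] by (simp add: algebra_simps)
    finally show ?thesis by (simp add: \<alpha>_def algebra_simps)
  qed
  have D2: "\<beta> *\<^sub>R y3 = qcnj b * (qcnj a * (P * ii)) + R *\<^sub>R (qcnj c * P)"
  proof -
    have "(R * R) *\<^sub>R y3 = R *\<^sub>R (R *\<^sub>R y3)" by simp
    also have "\<dots> = qcnj b * ((R *\<^sub>R y2) * ii) + R *\<^sub>R (qcnj c * P)"
      unfolding W3[symmetric] by (simp add: algebra_simps)
    also have "\<dots> = qcnj b * (qcnj a * (P * ii)) - qcnj b * (b * (T * ii)) + R *\<^sub>R (qcnj c * P)"
      unfolding W2[symmetric] by (simp add: algebra_simps)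
    also have "\<dots> = qcnj b * (qcnj a * (P * ii)) + nrm b *\<^sub>R y3 + R *\<^sub>R (qcnj c * P)"
      unfolding PT by simp
    finally show ?thesis by (simp add: \<beta>_def algebra_simps)
  qed
  have D2T: "\<beta> *\<^sub>R T = - (qcnj b * (qcnj a * P)) + R *\<^sub>R (qcnj c * (P * ii))"
  proof -
    have "\<beta> *\<^sub>R T = (\<beta> *\<^sub>R y3) * ii" by (simp add: T_def)
    also have "\<dots> = - (qcnj b * (qcnj a * P)) + R *\<^sub>R (qcnj c * (P * ii))"
      unfolding D2 by (simp add: algebra_simps)
    finally show ?thesis .
  qed
  define g where "g = a * b * qcnj c"
  have ab: "\<alpha> * \<beta> = nrm a * nrm b + R * R * nrm c" unfolding \<alpha>_def \<beta>_def S by (simp add: algebra_simps)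
  have "(\<alpha> * \<beta>) *\<^sub>R P = \<beta> *\<^sub>R (\<alpha> *\<^sub>R P)" by (simp add: algebra_simps)
  also have "\<dots> = - (a * (b * (\<beta> *\<^sub>R T))) + R *\<^sub>R (c * (\<beta> *\<^sub>R y3))"
    unfolding D1 by (simp add: algebra_simps)
  also have "\<dots> = (nrm a * nrm b) *\<^sub>R P + (R * R * nrm c) *\<^sub>R P + R *\<^sub>R ((qcnj g - g) * (P * ii))"
    unfolding D2T D2 g_def by (simp add: algebra_simps qcnj_mult)
  finally have "(nrm a * nrm b + R * R * nrm c) *\<^sub>R P = (nrm a * nrm b) *\<^sub>R P + (R * R * nrm c) *\<^sub>R P + R *\<^sub>R ((qcnj g - g) * (P * ii))"
    unfolding ab .
  then have "R *\<^sub>R ((qcnj g - g) * (P * ii)) = 0" unfolding scaleR_add_left by (metis add_cancel_left_right)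
  then have "(qcnj g - g) * (P * ii) = 0" using R by (metis scaleR_eq_0_iff less_irrefl)
  then have "- ((qcnj g - g) * y1) = 0" unfolding PT by simp
  then have "(qcnj g - g) * y1 = 0" by simp
  then have "- (g * y1) = g * y1" using cnj_neg_of_re0[OF G[folded g_def]] by (simp add: algebra_simps)
  then have "g * y1 = 0" by (rule neg_self_quat)
  moreover have "g \<noteq> 0" using nz by (simp add: g_def quat_mult_eq_0)
  ultimately have y1: "y1 = 0" by (simp add: quat_mult_eq_0)
  then have "P = 0" by (simp add: P_def)
  then have "\<beta> *\<^sub>R y3 = 0" using D2 by simp
  moreover have "\<beta> > 0" unfolding \<beta>_def S using nz nrm_ge0[of a] nrm_ge0[of c] nrm_eq0[of a] by simp
  ultimately have y3: "y3 = 0" by simp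
  then have "R *\<^sub>R y2 = 0" using W2 \<open>P = 0\<close> by (simp add: T_def)
  then have "y2 = 0" using R by simp
  then show False using n y1 y3 by (simp add: NN_def)
qed


lemma FF_scale: "FF a b c (t *\<^sub>R z1) (t *\<^sub>R z2) (t *\<^sub>R z3) = (t * t) *\<^sub>R FF a b c z1 z2 z3"
  by (simp add: FF_def algebra_simps)

lemma NN_scale: "NN (t *\<^sub>R z1) (t *\<^sub>R z2) (t *\<^sub>R z3) = (t * t) * NN z1 z2 z3"
  by (simp add: NN_def algebra_simps power2_eq_square)

lemma not_disk:
  assumes nz: "a \<noteq> 0" "b \<noteq> 0" "c \<noteq> 0"
    and D: "closed_disk_origin {FF a b c x1 x2 x3 | x1 x2 x3. NN x1 x2 x3 = 1}"
  shows False
proof -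
  obtain r where r0: "r \<ge> 0" and W: "{FF a b c x1 x2 x3 | x1 x2 x3. NN x1 x2 x3 = 1} = {q. qabs q \<le> r}"
    using D unfolding closed_disk_origin_def by blast
  have bnd: "qabs (FF a b c x1 x2 x3) \<le> r" if "NN x1 x2 x3 = 1" for x1 x2 x3
  proof -
    have "FF a b c x1 x2 x3 \<in> {FF a b c x1 x2 x3 | x1 x2 x3. NN x1 x2 x3 = 1}" using that by blast
    then show ?thesis using W by simp
  qed
  have att: "\<exists>x1 x2 x3. NN x1 x2 x3 = 1 \<and> FF a b c x1 x2 x3 = q" if "qabs q \<le> r" for q
  proof -
    have "q \<in> {FF a b c x1 x2 x3 | x1 x2 x3. NN x1 x2 x3 = 1}" using W that by simp
    then show ?thesis by blast
  qed
  have rpos: "r > 0"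
  proof -
    define s where "s = sqrt (1/2 :: real)"
    have ss: "s * s = 1/2" by (simp add: s_def)
    have "NN (s *\<^sub>R 1) (s *\<^sub>R 1) 0 = 1" by (simp add: NN_def power2_eq_square ss)
    moreover have "FF a b c (s *\<^sub>R 1) (s *\<^sub>R 1) 0 = (s * s) *\<^sub>R a" by (simp add: FF_def)
    ultimately have "qabs ((s * s) *\<^sub>R a) \<le> r" using bnd by metis
    moreover have "qabs ((s * s) *\<^sub>R a) = qabs a / 2"
      by (simp add: qabs_nrm ss real_sqrt_mult power2_eq_square real_sqrt_divide)
    moreover have "qabs a > 0" using nz qabs_ge0[of a] qabs_eq0[of a] by linarith
    ultimately show ?thesis by linarith
  qed
  have hom: "qRe (qcnj u * FF a b c z1 z2 z3) \<le> r * NN z1 z2 z3" if u: "nrm u = 1" for u z1 z2 z3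
  proof (cases "NN z1 z2 z3 = 0")
    case True
    then have "z1 = 0" "z2 = 0" "z3 = 0" unfolding NN_def
      using nrm_ge0[of z1] nrm_ge0[of z2] nrm_ge0[of z3] nrm_eq0 by (smt (verit))+
    then show ?thesis by (simp add: FF_def NN_def)
  next
    case False
    define N where "N = NN z1 z2 z3"
    have N: "N > 0" using False nrm_ge0 unfolding N_def NN_def by (smt (verit))
    define t where "t = 1 / sqrt N"
    have tt: "t * t = 1 / N" using N by (simp add: t_def)
    have "NN (t *\<^sub>R z1) (t *\<^sub>R z2) (t *\<^sub>R z3) = 1" unfolding NN_scale tt N_def[symmetric] using N by simp
    then have "qabs (FF a b c (t *\<^sub>R z1) (t *\<^sub>R z2) (t *\<^sub>R z3)) \<le> r" by (rule bnd)
    moreover have "qRe (qcnj u * FF a b c (t *\<^sub>R z1) (t *\<^sub>R z2) (t *\<^sub>R z3)) \<le> qabs (FF a b c (t *\<^sub>R z1) (t *\<^sub>R z2) (t *\<^sub>R z3))"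
    proof -
      have "qabs (qcnj u * FF a b c (t *\<^sub>R z1) (t *\<^sub>R z2) (t *\<^sub>R z3)) = qabs (FF a b c (t *\<^sub>R z1) (t *\<^sub>R z2) (t *\<^sub>R z3))"
        using u by (simp add: qabs_nrm nrm_mult)
      then show ?thesis
        using qRe_le_qabs[of "qcnj u * FF a b c (t *\<^sub>R z1) (t *\<^sub>R z2) (t *\<^sub>R z3)"] by linarith
    qed
    ultimately have "(1 / N) * qRe (qcnj u * FF a b c z1 z2 z3) \<le> r"
      unfolding FF_scale tt by simp
    then show ?thesis using N unfolding N_def[symmetric] by (simp add: field_simps)
  qed
  have sol: "\<exists>y1 y2 y3. NN y1 y2 y3 = 1 \<and> VV1 a c u r y1 y2 y3 = 0 \<and> VV2 a b u r y1 y2 y3 = 0 \<and> VV3 b c u r y1 y2 y3 = 0"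
    if u: "nrm u = 1" for u
  proof -
    have "qabs (r *\<^sub>R u) \<le> r" using u r0 by (simp add: qabs_nrm)
    then obtain y1 y2 y3 where y: "NN y1 y2 y3 = 1" "FF a b c y1 y2 y3 = r *\<^sub>R u" using att by blast
    have "qRe (qcnj u * FF a b c y1 y2 y3) = r * NN y1 y2 y3"
      using y u by (simp add: cnj_mult_self)
    then have "VV1 a c u r y1 y2 y3 = 0 \<and> VV2 a b u r y1 y2 y3 = 0 \<and> VV3 b c u r y1 y2 y3 = 0"
      using foc[OF hom[OF u]] by blast
    then show ?thesis using y by blast
  qed
  define R where "R = 2 * r"
  have R: "R > 0" using rpos by (simp add: R_def)
  define G where "G = qRe (a * b * qcnj c)"
  have rc: "(R * R - nrm a) * (R * R - nrm b) = nrm a * nrm b + R * R * nrm c + 2 * \<sigma> * R * G"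
    if s: "\<sigma> * \<sigma> = 1" for \<sigma> :: real
  proof -
    have u: "nrm (\<sigma> *\<^sub>R (1::quat)) = 1" using s by (simp add: power2_eq_square)
    obtain y1 y2 y3 where y: "NN y1 y2 y3 = 1" "VV1 a c (\<sigma> *\<^sub>R 1) r y1 y2 y3 = 0"
      "VV2 a b (\<sigma> *\<^sub>R 1) r y1 y2 y3 = 0" "VV3 b c (\<sigma> *\<^sub>R 1) r y1 y2 y3 = 0"
      using sol[OF u] by blast
    note Z = VV_conj[OF y(2-4)]
    show ?thesis unfolding G_def
      by (rule real_case[OF s R y(1)]) (use Z in \<open>simp_all add: R_def algebra_simps\<close>)
  qed
  have e1: "(R * R - nrm a) * (R * R - nrm b) = nrm a * nrm b + R * R * nrm c + 2 * R * G"
    using rc[of 1] by simp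
  have e2: "(R * R - nrm a) * (R * R - nrm b) = nrm a * nrm b + R * R * nrm c - 2 * R * G"
    using rc[of "-1"] by simp
  have "4 * R * G = 0" using e1 e2 by simp
  then have G0: "G = 0" using R by simp
  have "R * R * (R * R - (nrm a + nrm b + nrm c)) = 0" using e1 G0 by (simp add: algebra_simps)
  then have S: "R * R = nrm a + nrm b + nrm c" using R by simp
  obtain y1 y2 y3 where y: "NN y1 y2 y3 = 1" "VV1 a c ii r y1 y2 y3 = 0"
      "VV2 a b ii r y1 y2 y3 = 0" "VV3 b c ii r y1 y2 y3 = 0"
    using sol[of ii] by auto
  note Z = VV_conj[OF y(2-4)]
  show False
    by (rule imag_case[OF R y(1) nz S G0[unfolded G_def]]) (use Z in \<open>simp_all add: R_def\<close>)
qed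


theorem theorem5p1:
  fixes A :: "nat \<Rightarrow> nat \<Rightarrow> quat"
  assumes "strictly_upper_triangular 3 A"
  shows "(closed_disk_origin (numerical_range 3 A) \<longleftrightarrow> cycle_free 3 A)
       \<and> (cycle_free 3 A \<longleftrightarrow> A 1 2 * A 1 3 * A 2 3 = 0)"
proof -
  have W: "numerical_range 3 A = {FF (A 1 2) (A 2 3) (A 1 3) x1 x2 x3 | x1 x2 x3. NN x1 x2 x3 = 1}"
    by (rule W_char[OF assms])
  have C: "cycle_free 3 A \<longleftrightarrow> (A 1 2 = 0 \<or> A 1 3 = 0 \<or> A 2 3 = 0)"
    by (rule cycle_char[OF assms])
  have "closed_disk_origin (numerical_range 3 A) \<longleftrightarrow> (A 1 2 = 0 \<or> A 1 3 = 0 \<or> A 2 3 = 0)"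
  proof
    assume "closed_disk_origin (numerical_range 3 A)"
    then show "A 1 2 = 0 \<or> A 1 3 = 0 \<or> A 2 3 = 0" using not_disk unfolding W by blast
  next
    assume "A 1 2 = 0 \<or> A 1 3 = 0 \<or> A 2 3 = 0"
    then show "closed_disk_origin (numerical_range 3 A)"
      unfolding W using disk_a0 disk_b0 disk_c0 by auto
  qed
  moreover have "A 1 2 * A 1 3 * A 2 3 = 0 \<longleftrightarrow> (A 1 2 = 0 \<or> A 1 3 = 0 \<or> A 2 3 = 0)"
    by (simp add: quat_mult_eq_0)
  ultimately show ?thesis using C by blast
qed

end
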